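(* Let $a,b,x$ be non-commuting indeterminates and define polynomials $d_n=d_n(a,b,x)\in\mathbb{Z}\langle a,b,x\rangle$ for $n\ge 1$ by $$d_1=1,\qquad d_n=d_{n-1}\,x+\sum_{k=2}^{n-1} d_{n-k}\,a\,d_k\,b\quad (n\ge 2),$$ and set $c_n(a,b,x)=a\,d_n(a,b,x)\,b$ for $n\ge1$. Then, in the ring $\mathbb{Z}\langle\langle a,b\rangle\rangle$ of formal power series in the non-commuting variables $a,b$, $$1-\sum_{n=1}^{\infty} c_n(a,b,ab-ba)=\Big(\sum_{n\ge 0}a^nb^n\Big)^{-1}.$$
   Context: $\mathbb{Z}\langle\langle a,b\rangle\rangle$ denotes formal power series in non-commuting variables $a,b$ with integer coefficients; a series with constant term $1$ is invertible there. $c_n(a,b,ab-ba)$ denotes the polynomial obtained from $c_n(a,b,x)$ by substituting $x\mapsto ab-ba$; since $c_n(a,b,ab-ba)$ is homogeneous of degree $2n$ in $a,b$, the infinite sum converges formally. *)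

theory Defs
  imports Main
begin

text \<open>Formal power series in non-commuting variables over the integers, with
variables drawn from an alphabet 'l: a series is its coefficient function on
words (lists of letters). Noncommutative polynomials are the finitely
supported series.\<close>

type_synonym 'l ser = "'l list \<Rightarrow> int"

definition szero :: "'l ser" where "szero = (\<lambda>w. 0)"
definition sone :: "'l ser" where "sone = (\<lambda>w. if w = [] then 1 else 0)"
definition sadd :: "'l ser \<Rightarrow> 'l ser \<Rightarrow> 'l ser" where "sadd f g = (\<lambda>w. f w + g w)"
definition ssub :: "'l ser \<Rightarrow> 'l ser \<Rightarrow> 'l ser" where "ssub f g = (\<lambda>w. f w - g w)"
definition smul :: "'l ser \<Rightarrow> 'l ser \<Rightarrow> 'l ser" where
  "smul f g = (\<lambda>w. \<Sum>i\<le>length w. f (take i w) * g (drop i w))"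
definition sletter :: "'l \<Rightarrow> 'l ser" where "sletter c = (\<lambda>w. if w = [c] then 1 else 0)"

fun spow :: "'l ser \<Rightarrow> nat \<Rightarrow> 'l ser" where
  "spow f 0 = sone"
| "spow f (Suc n) = smul f (spow f n)"

text \<open>Formal (coefficientwise) sum of a family of series; meaningful when each
coefficient receives only finitely many nonzero contributions.\<close>
definition fsum :: "(nat \<Rightarrow> 'l ser) \<Rightarrow> 'l ser" where
  "fsum F = (\<lambda>w. \<Sum>n\<in>{n. F n w \<noteq> 0}. F n w)"

datatype abx = La | Lb | Lx
datatype ab = Ta | Tb

function d :: "nat \<Rightarrow> abx ser" where
  "d n = (if n \<le> 1 then sone
          else sadd (smul (d (n - 1)) (sletter Lx))
                    (\<lambda>w. \<Sum>k\<in>{2..n-1}. smul (d (n - k)) (smul (sletter La) (smul (d k) (sletter Lb))) w))"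
  by auto
termination by (relation "measure id") auto

definition c :: "nat \<Rightarrow> abx ser" where
  "c n = smul (sletter La) (smul (d n) (sletter Lb))"

text \<open>Substitution a \<mapsto> a, b \<mapsto> b, x \<mapsto> ab - ba, for polynomials (finitely supported series).\<close>
fun limg :: "abx \<Rightarrow> ab ser" where
  "limg La = sletter Ta"
| "limg Lb = sletter Tb"
| "limg Lx = ssub (smul (sletter Ta) (sletter Tb)) (smul (sletter Tb) (sletter Ta))"

definition wimg :: "abx list \<Rightarrow> ab ser" where
  "wimg w = foldr (\<lambda>l acc. smul (limg l) acc) w sone"

definition subst_comm :: "abx ser \<Rightarrow> ab ser" where
  "subst_comm p = (\<lambda>u. \<Sum>w\<in>{w. p w \<noteq> 0}. p w * wimg w u)"

end

theory Submission
  imports Defs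
begin


lemma smul_Nil[simp]: "smul f g [] = f [] * g []"
  by (simp add: smul_def)

lemma smul_Cons: "smul f g (x#w) = f [] * g (x#w) + smul (\<lambda>v. f (x#v)) g w"
  unfolding smul_def length_Cons sum.atMost_Suc_shift by simp

lemma smul_add_left: "smul (\<lambda>v. f v + h v) g w = smul f g w + smul h g w"
  by (simp add: smul_def sum.distrib ring_distribs)

lemma smul_scal_left: "smul (\<lambda>v. k * f v) g w = k * smul f g w"
  by (simp add: smul_def sum_distrib_left mult.assoc)

lemma smul_assoc: "smul (smul f g) h w = smul f (smul g h) w"
proof (induction w arbitrary: f)
  case Nil
  then show ?case by simp
next
  case (Cons x w)
  have sh: "(\<lambda>v. smul f g (x#v)) = (\<lambda>v. f [] * g (x#v) + smul (\<lambda>v. f (x#v)) g v)"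
    by (simp add: smul_Cons)
  have "smul (smul f g) h (x#w) = f [] * g [] * h (x#w) + smul (\<lambda>v. smul f g (x#v)) h w"
    by (simp add: smul_Cons)
  also have "smul (\<lambda>v. smul f g (x#v)) h w
     = f [] * smul (\<lambda>v. g (x#v)) h w + smul (smul (\<lambda>v. f (x#v)) g) h w"
    unfolding sh by (simp add: smul_add_left smul_scal_left)
  also have "smul (smul (\<lambda>v. f (x#v)) g) h w = smul (\<lambda>v. f (x#v)) (smul g h) w"
    by (rule Cons.IH)
  finally show ?case by (simp add: smul_Cons algebra_simps)
qed

lemma smul_one_left: "smul sone f w = f w"
proof (cases w)
  case (Cons x v)
  have "smul (\<lambda>u. sone (x#u)) f v = 0" by (simp add: smul_def sone_def)
  then show ?thesis using Cons by (simp add: smul_Cons sone_def)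
qed (simp add: sone_def)

lemma smul_one_right: "smul f sone w = f w"
proof (induction w arbitrary: f)
  case Nil then show ?case by (simp add: sone_def)
next
  case (Cons x w) then show ?case by (simp add: smul_Cons sone_def)
qed

lemma smul_add_right: "smul f (\<lambda>v. g v + h v) w = smul f g w + smul f h w"
  by (simp add: smul_def sum.distrib ring_distribs)

typedef 'l nc = "UNIV :: ('l list \<Rightarrow> int) set" morphisms coeff Ser by auto

lemma coeff_Ser[simp]: "coeff (Ser f) = f"
  by (simp add: Ser_inverse)

lemma nc_eqI: "(\<And>w. coeff x w = coeff y w) \<Longrightarrow> x = y"
  by (metis coeff_inverse ext)

instantiation nc :: (type) ring_1
begin
definition "0 = Ser (\<lambda>_. 0)"
definition "1 = Ser sone"
definition "x + y = Ser (\<lambda>w. coeff x w + coeff y w)"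
definition "x - y = Ser (\<lambda>w. coeff x w - coeff y w)"
definition "- x = Ser (\<lambda>w. - coeff x w)"
definition "x * y = Ser (smul (coeff x) (coeff y))"
instance
proof
  fix a b c :: "'a nc"
  show "a * b * c = a * (b * c)"
    by (rule nc_eqI) (simp add: times_nc_def smul_assoc)
  show "a + b + c = a + (b + c)"
    by (rule nc_eqI) (simp add: plus_nc_def)
  show "a + b = b + a"
    by (rule nc_eqI) (simp add: plus_nc_def)
  show "0 + a = a"
    by (rule nc_eqI) (simp add: plus_nc_def zero_nc_def)
  show "- a + a = 0"
    by (rule nc_eqI) (simp add: plus_nc_def zero_nc_def uminus_nc_def)
  show "a - b = a + - b"
    by (rule nc_eqI) (simp add: plus_nc_def minus_nc_def uminus_nc_def)
  show "1 * a = a"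
    by (rule nc_eqI) (simp add: times_nc_def one_nc_def smul_one_left)
  show "a * 1 = a"
    by (rule nc_eqI) (simp add: times_nc_def one_nc_def smul_one_right)
  show "(a + b) * c = a * c + b * c"
    by (rule nc_eqI) (simp add: times_nc_def plus_nc_def smul_add_left)
  show "a * (b + c) = a * b + a * c"
    by (rule nc_eqI) (simp add: times_nc_def plus_nc_def smul_add_right)
  show "(0::'a nc) \<noteq> 1"
  proof
    assume "(0::'a nc) = 1"
    then have "coeff (0::'a nc) [] = coeff 1 []" by simp
    then show False by (simp add: zero_nc_def one_nc_def sone_def)
  qed
qed
end

lemma coeff_zero[simp]: "coeff 0 w = 0" by (simp add: zero_nc_def)
lemma coeff_one: "coeff 1 w = (if w = [] then 1 else 0)" by (simp add: one_nc_def sone_def)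
lemma coeff_add[simp]: "coeff (x + y) w = coeff x w + coeff y w" by (simp add: plus_nc_def)
lemma coeff_diff[simp]: "coeff (x - y) w = coeff x w - coeff y w" by (simp add: minus_nc_def)
lemma coeff_uminus[simp]: "coeff (- x) w = - coeff x w" by (simp add: uminus_nc_def)
lemma coeff_mult: "coeff (x * y) = smul (coeff x) (coeff y)" by (simp add: times_nc_def)
lemma Ser_mult: "Ser (smul f g) = Ser f * Ser g" by (simp add: times_nc_def)

lemma coeff_sum: "coeff (sum F A) w = (\<Sum>a\<in>A. coeff (F a) w)"
  by (induction A rule: infinite_finite_induct) auto



definition Ltr :: "'l \<Rightarrow> 'l nc" where "Ltr l = Ser (sletter l)"

lemma coeff_Ltr_mult: "coeff (Ltr l * f) w = (case w of [] \<Rightarrow> 0 | x#v \<Rightarrow> if x = l then coeff f v else 0)"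
proof (cases w)
  case Nil then show ?thesis by (simp add: coeff_mult Ltr_def sletter_def)
next
  case (Cons x v)
  have e: "(\<lambda>u. sletter l (x#u)) = (if x = l then sone else (\<lambda>_. 0))"
    by (auto simp: sletter_def sone_def)
  have z: "smul (\<lambda>_. 0) g v = 0" for g :: "'a list \<Rightarrow> int" by (simp add: smul_def)
  have "coeff (Ltr l * f) w = sletter l [] * coeff f (x#v) + smul (\<lambda>u. sletter l (x#u)) (coeff f) v"
    using Cons by (simp add: coeff_mult Ltr_def smul_Cons)
  also have "\<dots> = (if x = l then coeff f v else 0)"
    by (simp add: e z smul_one_left) (simp add: sletter_def)
  finally show ?thesis using Cons by simp
qed

lemma smul_letter_right: "smul g (sletter l) w = (if w \<noteq> [] \<and> last w = l then g (butlast w) else 0)"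
proof (induction w arbitrary: g)
  case Nil then show ?case by (simp add: sletter_def)
next
  case (Cons x w) then show ?case by (auto simp: smul_Cons sletter_def)
qed

lemma coeff_mult_Ltr: "coeff (f * Ltr l) w = (if w \<noteq> [] \<and> last w = l then coeff f (butlast w) else 0)"
  by (simp add: coeff_mult Ltr_def smul_letter_right)

lemma coeff_ALB_Nil: "coeff (Ltr a * f * Ltr b) [] = 0"
  by (simp add: coeff_mult_Ltr)
lemma coeff_ALB_single: "coeff (Ltr a * f * Ltr b) [x] = 0"
  by (simp add: coeff_mult_Ltr coeff_Ltr_mult)
lemma coeff_ALB: "coeff (Ltr a * f * Ltr b) (x # v @ [y]) = (if x = a \<and> y = b then coeff f v else 0)"
  by (simp add: coeff_mult_Ltr coeff_Ltr_mult butlast_append)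

lemma list_cases3: "w = [] \<or> (\<exists>x. w = [x]) \<or> (\<exists>x v y. w = x # v @ [y])"
  by (metis append_butlast_last_id list.exhaust)

definition hom :: "'l nc \<Rightarrow> nat \<Rightarrow> bool" where
  "hom x k \<longleftrightarrow> (\<forall>v. coeff x v \<noteq> 0 \<longrightarrow> length v = k)"

lemma hom_zero: "hom 0 k" by (simp add: hom_def)
lemma hom_one: "hom 1 0" by (simp add: hom_def coeff_one)
lemma hom_Ltr: "hom (Ltr l) 1" by (simp add: hom_def Ltr_def sletter_def)
lemma hom_add: "hom x k \<Longrightarrow> hom y k \<Longrightarrow> hom (x + y) k"
  unfolding hom_def by (metis add.right_neutral coeff_add coeff_diff diff_zero)
lemma hom_diff: "hom x k \<Longrightarrow> hom y k \<Longrightarrow> hom (x - y) k"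
  unfolding hom_def by (metis add.right_neutral coeff_add coeff_diff diff_zero)
lemma hom_uminus: "hom x k \<Longrightarrow> hom (- x) k" by (auto simp: hom_def)
lemma hom_sum: "(\<And>a. a \<in> A \<Longrightarrow> hom (F a) k) \<Longrightarrow> hom (sum F A) k"
  by (induction A rule: infinite_finite_induct) (auto simp: hom_zero hom_add)

lemma hom_mult: assumes "hom x p" "hom y q" shows "hom (x * y) (p + q)"
  unfolding hom_def
proof (intro allI impI)
  fix v assume nz: "coeff (x * y) v \<noteq> 0"
  show "length v = p + q"
  proof (rule ccontr)
    assume ne: "length v \<noteq> p + q"
    have "coeff (x * y) v = 0"
      unfolding coeff_mult smul_def
    proof (rule sum.neutral, intro ballI)
      fix i assume "i \<in> {..length v}"
      then have "i \<le> length v" by simp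
      show "coeff x (take i v) * coeff y (drop i v) = 0"
        using assms ne \<open>i \<le> length v\<close> unfolding hom_def
        by (metis add.commute le_add_diff_inverse length_drop length_take min.absorb2 mult_eq_0_iff)
    qed
    with nz show False by simp
  qed
qed

lemma hom_power: "hom x p \<Longrightarrow> hom (x ^ n) (n * p)"
  by (induction n) (auto simp: hom_one dest: hom_mult)

lemma sum_single: "finite A \<Longrightarrow> a \<in> A \<Longrightarrow> (\<And>i. i \<in> A \<Longrightarrow> i \<noteq> a \<Longrightarrow> f i = 0) \<Longrightarrow> sum f A = f a"
  by (simp add: sum.remove sum.neutral)

lemma coeff_mult_hom:
  assumes "hom x p" "hom y q" "length w = p + q"
  shows "coeff (x * y) w = coeff x (take p w) * coeff y (drop p w)"
  unfolding coeff_mult smul_def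
proof (rule sum_single)
  fix i assume "i \<in> {..length w}" "i \<noteq> p"
  then show "coeff x (take i w) * coeff y (drop i w) = 0"
    using assms(1) unfolding hom_def by auto
qed (use assms(3) in auto)

lemma vanish_Gmul:
  assumes "coeff G [] = 0" "\<forall>v. length v < length w \<longrightarrow> coeff Z v = 0"
  shows "coeff (G * Z) w = 0"
  unfolding coeff_mult smul_def
proof (rule sum.neutral, intro ballI)
  fix i assume "i \<in> {..length w}"
  show "coeff G (take i w) * coeff Z (drop i w) = 0"
  proof (cases "i = 0")
    case True then show ?thesis using assms(1) by simp
  next
    case False
    then have "w \<noteq> []" using \<open>i \<in> {..length w}\<close> by auto
    then have "length (drop i w) < length w" using False by simp
    then show ?thesis using assms(2) by simp
  qed
qed

lemma vanish_mulG:
  assumes "coeff G [] = 0" "\<forall>v. length v < length w \<longrightarrow> coeff Z v = 0"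
  shows "coeff (Z * G) w = 0"
  unfolding coeff_mult smul_def
proof (rule sum.neutral, intro ballI)
  fix i assume "i \<in> {..length w}"
  show "coeff Z (take i w) * coeff G (drop i w) = 0"
  proof (cases "i = length w")
    case True then show ?thesis using assms(1) by simp
  next
    case False
    then have "length (take i w) < length w" using \<open>i \<in> {..length w}\<close> by simp
    then show ?thesis using assms(2) by simp
  qed
qed

lemma vanish_AZB:
  assumes "\<forall>v. length v < length w \<longrightarrow> coeff Z v = 0"
  shows "coeff (Ltr a * Z * Ltr b) w = 0"
  using list_cases3[of w] assms
  by (auto simp: coeff_ALB_Nil coeff_ALB_single coeff_ALB)

lemma contraction:
  assumes "\<And>w. (\<forall>v. length v < length w \<longrightarrow> coeff Z v = 0) \<Longrightarrow> coeff Z w = 0"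
  shows "Z = 0"
proof -
  have "coeff Z w = 0" for w
  proof (induction w rule: measure_induct_rule[of length])
    case (less w) then show ?case using assms by blast
  qed
  then show ?thesis by (intro nc_eqI) simp
qed



definition hom2 :: "(nat \<Rightarrow> 'l nc) \<Rightarrow> bool" where "hom2 F \<longleftrightarrow> (\<forall>n. hom (F n) (2*n))"
definition Fs :: "(nat \<Rightarrow> 'l nc) \<Rightarrow> 'l nc" where "Fs F = Ser (fsum (\<lambda>n. coeff (F n)))"

lemma fsum_single: "{n. F n w \<noteq> 0} \<subseteq> {m} \<Longrightarrow> fsum F w = F m w"
proof (cases "F m w = 0")
  case True
  assume "{n. F n w \<noteq> 0} \<subseteq> {m}"
  then have "{n. F n w \<noteq> 0} = {}" using True by auto
  then show ?thesis using True by (simp add: fsum_def)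
next
  case False
  assume "{n. F n w \<noteq> 0} \<subseteq> {m}"
  then have "{n. F n w \<noteq> 0} = {m}" using False by auto
  then show ?thesis by (simp add: fsum_def)
qed

lemma coeff_Fs: assumes "hom2 F" shows "coeff (Fs F) w = coeff (F (length w div 2)) w"
proof -
  have "{n. coeff (F n) w \<noteq> 0} \<subseteq> {length w div 2}"
    using assms by (auto simp: hom2_def hom_def)
  then show ?thesis unfolding Fs_def coeff_Ser by (rule fsum_single)
qed

lemma hom2_add: "hom2 F \<Longrightarrow> hom2 G \<Longrightarrow> hom2 (\<lambda>n. F n + G n)"
  by (simp add: hom2_def hom_add)
lemma hom2_diff: "hom2 F \<Longrightarrow> hom2 G \<Longrightarrow> hom2 (\<lambda>n. F n - G n)"
  by (simp add: hom2_def hom_diff)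

lemma Fs_add: "hom2 F \<Longrightarrow> hom2 G \<Longrightarrow> Fs F + Fs G = Fs (\<lambda>n. F n + G n)"
  by (rule nc_eqI) (simp add: coeff_Fs hom2_add)
lemma Fs_diff: "hom2 F \<Longrightarrow> hom2 G \<Longrightarrow> Fs F - Fs G = Fs (\<lambda>n. F n - G n)"
  by (rule nc_eqI) (simp add: coeff_Fs hom2_diff)

lemma hom2_single: "hom x (2*k) \<Longrightarrow> hom2 (\<lambda>n. if n = k then x else 0)"
  by (simp add: hom2_def hom_zero)

lemma Fs_single: fixes x :: "'l nc" assumes "hom x (2*k)" shows "Fs (\<lambda>n. if n = k then x else 0) = x"
proof (rule nc_eqI)
  fix w :: "'l list"
  show "coeff (Fs (\<lambda>n. if n = k then x else 0)) w = coeff x w"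
    using assms unfolding coeff_Fs[OF hom2_single[OF assms]]
    by (auto simp: hom_def)
qed

lemma hom2_cauchy: "hom2 F \<Longrightarrow> hom2 G \<Longrightarrow> hom2 (\<lambda>n. \<Sum>a\<le>n. F a * G (n - a))"
  unfolding hom2_def
proof (intro allI hom_sum)
  fix n a :: nat assume "\<forall>n. hom (F n) (2 * n)" "\<forall>n. hom (G n) (2 * n)" "a \<in> {..n}"
  then have "hom (F a * G (n - a)) (2 * a + 2 * (n - a))" by (simp add: hom_mult)
  then show "hom (F a * G (n - a)) (2 * n)" using \<open>a \<in> {..n}\<close>
    by (metis add_mult_distrib2 atMost_iff le_add_diff_inverse)
qed

lemma Fs_cauchy:
  fixes F G :: "nat \<Rightarrow> 'l nc"
  assumes F: "hom2 F" and G: "hom2 G"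
  shows "Fs F * Fs G = Fs (\<lambda>n. \<Sum>a\<le>n. F a * G (n - a))"
proof (rule nc_eqI)
  fix w :: "'l list"
  define N where "N = length w div 2"
  have hF: "hom (F n) (2*n)" for n using F by (simp add: hom2_def)
  have hG: "hom (G n) (2*n)" for n using G by (simp add: hom2_def)
  define t where "t i = coeff (F (i div 2)) (take i w) * coeff (G ((length w - i) div 2)) (drop i w)" for i
  have L: "coeff (Fs F * Fs G) w = (\<Sum>i\<le>length w. t i)"
    unfolding coeff_mult smul_def t_def
    by (intro sum.cong refl) (simp add: coeff_Fs[OF F] coeff_Fs[OF G])
  have R: "coeff (Fs (\<lambda>n. \<Sum>a\<le>n. F a * G (n - a))) w = (\<Sum>a\<le>N. coeff (F a * G (N - a)) w)"
    by (simp add: coeff_Fs[OF hom2_cauchy[OF F G]] coeff_sum N_def)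
  show "coeff (Fs F * Fs G) w = coeff (Fs (\<lambda>n. \<Sum>a\<le>n. F a * G (n - a))) w"
  proof (cases "even (length w)")
    case False
    have "t i = 0" if "i \<le> length w" for i
    proof -
      have "coeff (F (i div 2)) (take i w) = 0 \<or> coeff (G ((length w - i) div 2)) (drop i w) = 0"
      proof (rule ccontr)
        assume "\<not> ?thesis"
        then have "length (take i w) = 2 * (i div 2)" "length (drop i w) = 2 * ((length w - i) div 2)"
          using hF hG unfolding hom_def by blast+
        then have "i = 2 * (i div 2)" "length w - i = 2 * ((length w - i) div 2)"
          using that by auto
        then have "even (length w)" using that by (metis dvd_triv_left even_add le_add_diff_inverse)
        then show False using False by simp
      qed
      then show ?thesis by (auto simp: t_def)
    qed
    then have "coeff (Fs F * Fs G) w = 0" unfolding L by simp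
    moreover have "coeff (F a * G (N - a)) w = 0" if "a \<le> N" for a
    proof -
      have "hom (F a * G (N - a)) (2*a + 2*(N-a))" by (rule hom_mult[OF hF hG])
      moreover have "length w \<noteq> 2*a + 2*(N-a)" using False by auto
      ultimately show ?thesis unfolding hom_def by blast
    qed
    ultimately show ?thesis unfolding R by simp
  next
    case True
    then have lw: "length w = 2 * N" by (simp add: N_def)
    have "(\<Sum>i\<le>length w. t i) = (\<Sum>i\<in>(\<lambda>a. 2*a) ` {..N}. t i)"
    proof (rule sum.mono_neutral_right)
      show "(\<lambda>a. 2*a) ` {..N} \<subseteq> {..length w}" using lw by auto
      show "\<forall>i\<in>{..length w} - (\<lambda>a. 2*a) ` {..N}. t i = 0"
      proof
        fix i assume i: "i \<in> {..length w} - (\<lambda>a. 2*a) ` {..N}"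
        have "coeff (F (i div 2)) (take i w) = 0"
        proof (rule ccontr)
          assume "coeff (F (i div 2)) (take i w) \<noteq> 0"
          then have "length (take i w) = 2 * (i div 2)" using hF unfolding hom_def by blast
          then have "i = 2 * (i div 2)" using i by auto
          moreover have "i div 2 \<le> N" using i lw by auto
          ultimately show False using i by auto
        qed
        then show "t i = 0" by (simp add: t_def)
      qed
    qed simp
    also have "\<dots> = (\<Sum>a\<le>N. t (2*a))"
      by (subst sum.reindex) (auto simp: inj_on_def)
    also have "\<dots> = (\<Sum>a\<le>N. coeff (F a * G (N - a)) w)"
    proof (intro sum.cong refl)
      fix a assume "a \<in> {..N}"
      then have "length w = 2*a + 2*(N-a)" using lw by auto
      then have "coeff (F a * G (N - a)) w = coeff (F a) (take (2*a) w) * coeff (G (N-a)) (drop (2*a) w)"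
        by (rule coeff_mult_hom[OF hF hG])
      moreover have "(length w - 2*a) div 2 = N - a" using lw by auto
      ultimately show "t (2*a) = coeff (F a * G (N - a)) w" by (simp add: t_def)
    qed
    finally show ?thesis unfolding L R .
  qed
qed

lemma hom_ALB: "hom x k \<Longrightarrow> hom (Ltr a * x * Ltr b) (k + 2)"
  using hom_mult[OF hom_mult[OF hom_Ltr] hom_Ltr] by simp

lemma hom2_ALB: "hom2 F \<Longrightarrow> hom2 (\<lambda>n. if n = 0 then 0 else Ltr a * F (n - 1) * Ltr b)"
  unfolding hom2_def
proof (intro allI)
  fix n assume "\<forall>n. hom (F n) (2 * n)"
  then show "hom (if n = 0 then 0 else Ltr a * F (n - 1) * Ltr b) (2 * n)"
    using hom_ALB[of "F (n-1)" "2*(n-1)" a b]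
    by (cases n) (auto simp: hom_zero)
qed

lemma Fs_ALB:
  fixes F :: "nat \<Rightarrow> 'l nc"
  assumes F: "hom2 F"
  shows "Ltr a * Fs F * Ltr b = Fs (\<lambda>n. if n = 0 then 0 else Ltr a * F (n - 1) * Ltr b)"
proof (rule nc_eqI)
  fix w :: "'l list"
  show "coeff (Ltr a * Fs F * Ltr b) w = coeff (Fs (\<lambda>n. if n = 0 then 0 else Ltr a * F (n - 1) * Ltr b)) w"
    unfolding coeff_Fs[OF hom2_ALB[OF F]]
    using list_cases3[of w]
    by (auto simp: coeff_ALB_Nil coeff_ALB_single coeff_ALB coeff_Fs[OF F])
qed

lemma fsum_ALB:
  fixes F :: "nat \<Rightarrow> 'l nc"
  assumes F: "hom2 F"
  shows "Ser (fsum (\<lambda>n. coeff (Ltr a * F n * Ltr b))) = Ltr a * Fs F * Ltr b"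
proof (rule nc_eqI)
  fix w :: "'l list"
  define m where "m = length w div 2 - 1"
  have h: "hom (Ltr a * F n * Ltr b) (2*n+2)" for n
    using hom_ALB[of "F n" "2*n" a b] F by (simp add: hom2_def)
  have "{n. coeff (Ltr a * F n * Ltr b) w \<noteq> 0} \<subseteq> {m}"
    using h by (auto simp: hom_def m_def)
  then have L: "coeff (Ser (fsum (\<lambda>n. coeff (Ltr a * F n * Ltr b)))) w = coeff (Ltr a * F m * Ltr b) w"
    by (simp add: fsum_single)
  show "coeff (Ser (fsum (\<lambda>n. coeff (Ltr a * F n * Ltr b)))) w = coeff (Ltr a * Fs F * Ltr b) w"
  proof (cases "length w div 2 = 0")
    case True
    then have "coeff (Ltr a * F m * Ltr b) w = 0" using h[of m] unfolding hom_def by auto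
    then show ?thesis unfolding L Fs_ALB[OF F] coeff_Fs[OF hom2_ALB[OF F]] using True by simp
  next
    case False
    then show ?thesis unfolding L Fs_ALB[OF F] coeff_Fs[OF hom2_ALB[OF F]] by (simp add: m_def)
  qed
qed



definition supp :: "'l ser \<Rightarrow> 'l list set" where "supp p = {w. p w \<noteq> 0}"
definition Wimg :: "abx list \<Rightarrow> ab nc" where "Wimg w = Ser (wimg w)"
definition Limg :: "abx \<Rightarrow> ab nc" where "Limg l = Ser (limg l)"
definition sub :: "abx ser \<Rightarrow> ab nc" where "sub p = Ser (subst_comm p)"

lemma Wimg_Nil: "Wimg [] = 1" by (simp add: Wimg_def wimg_def one_nc_def)
lemma Wimg_Cons: "Wimg (l # u) = Limg l * Wimg u"
  by (simp add: Wimg_def wimg_def Limg_def Ser_mult)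
lemma Wimg_append: "Wimg (u @ v) = Wimg u * Wimg v"
  by (induction u) (simp_all add: Wimg_Nil Wimg_Cons mult.assoc)

lemma Limg_La: "Limg La = Ltr Ta" by (simp add: Limg_def Ltr_def)
lemma Limg_Lb: "Limg Lb = Ltr Tb" by (simp add: Limg_def Ltr_def)
lemma Limg_Lx: "Limg Lx = Ltr Ta * Ltr Tb - Ltr Tb * Ltr Ta"
  by (simp add: Limg_def Ltr_def ssub_def minus_nc_def times_nc_def)

lemma coeff_of_nat: "coeff (of_nat n :: 'l nc) w = (if w = [] then int n else 0)"
  by (induction n) (auto simp: coeff_one)

lemma coeff_of_int: "coeff (of_int k :: 'l nc) w = (if w = [] then k else 0)"
proof (cases k rule: int_cases)
  case (nonneg n) then show ?thesis by (simp add: coeff_of_nat)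
next
  case (neg n)
  have "(of_int k :: 'l nc) = - of_nat (Suc n)" using neg by simp
  then show ?thesis using neg by (simp add: coeff_of_nat del: of_nat_Suc)
qed

lemma coeff_of_int_mult: "coeff (of_int k * x :: 'l nc) w = k * coeff x w"
proof (cases w)
  case Nil then show ?thesis by (simp add: coeff_mult coeff_of_int)
next
  case (Cons a v)
  have "smul (\<lambda>u. coeff (of_int k :: 'l nc) (a # u)) (coeff x) v = 0"
    by (simp add: coeff_of_int smul_def)
  then show ?thesis using Cons by (simp add: coeff_mult smul_Cons coeff_of_int)
qed

lemma sub_eq:
  assumes "finite W" "supp p \<subseteq> W"
  shows "sub p = (\<Sum>w\<in>W. of_int (p w) * Wimg w)"
proof (rule nc_eqI)
  fix u
  have "coeff (sub p) u = (\<Sum>w\<in>supp p. p w * wimg w u)"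
    by (simp add: sub_def subst_comm_def supp_def)
  also have "\<dots> = (\<Sum>w\<in>W. p w * wimg w u)"
    by (rule sum.mono_neutral_left) (use assms in \<open>auto simp: supp_def\<close>)
  also have "\<dots> = coeff (\<Sum>w\<in>W. of_int (p w) * Wimg w) u"
    by (simp add: coeff_sum coeff_of_int_mult Wimg_def)
  finally show "coeff (sub p) u = coeff (\<Sum>w\<in>W. of_int (p w) * Wimg w) u" .
qed

lemma supp_sadd: "supp (sadd p q) \<subseteq> supp p \<union> supp q"
  by (auto simp: supp_def sadd_def)

lemma sub_sadd:
  assumes "finite (supp p)" "finite (supp q)"
  shows "sub (sadd p q) = sub p + sub q"
proof -
  let ?W = "supp p \<union> supp q"
  have "sub (sadd p q) = (\<Sum>w\<in>?W. of_int (sadd p q w) * Wimg w)"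
    using assms supp_sadd by (intro sub_eq) auto
  also have "\<dots> = (\<Sum>w\<in>?W. of_int (p w) * Wimg w) + (\<Sum>w\<in>?W. of_int (q w) * Wimg w)"
    by (simp add: sadd_def sum.distrib ring_distribs)
  also have "\<dots> = sub p + sub q"
  proof -
    have "sub p = (\<Sum>w\<in>?W. of_int (p w) * Wimg w)" "sub q = (\<Sum>w\<in>?W. of_int (q w) * Wimg w)"
      using assms by (auto intro: sub_eq)
    then show ?thesis by simp
  qed
  finally show ?thesis .
qed

lemma supp_sum: "supp (\<lambda>w. \<Sum>k\<in>K. F k w) \<subseteq> (\<Union>k\<in>K. supp (F k))"
proof
  fix w assume "w \<in> supp (\<lambda>w. \<Sum>k\<in>K. F k w)"
  then have "(\<Sum>k\<in>K. F k w) \<noteq> 0" by (simp add: supp_def)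
  then obtain k where "k \<in> K" "F k w \<noteq> 0" by (meson sum.not_neutral_contains_not_neutral)
  then show "w \<in> (\<Union>k\<in>K. supp (F k))" by (auto simp: supp_def)
qed

lemma sub_sum:
  assumes "finite K" "\<And>k. k \<in> K \<Longrightarrow> finite (supp (F k))"
  shows "sub (\<lambda>w. \<Sum>k\<in>K. F k w) = (\<Sum>k\<in>K. sub (F k))"
proof -
  let ?W = "\<Union>k\<in>K. supp (F k)"
  have fW: "finite ?W" using assms by auto
  have "sub (\<lambda>w. \<Sum>k\<in>K. F k w) = (\<Sum>w\<in>?W. of_int (\<Sum>k\<in>K. F k w) * Wimg w)"
    using fW supp_sum by (intro sub_eq) auto
  also have "\<dots> = (\<Sum>k\<in>K. \<Sum>w\<in>?W. of_int (F k w) * Wimg w)"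
    by (simp add: sum_distrib_right sum.swap[of _ _ K])
  also have "\<dots> = (\<Sum>k\<in>K. sub (F k))"
    using fW by (intro sum.cong refl, rule sub_eq[symmetric]) auto
  finally show ?thesis .
qed

lemma supp_smul: "supp (smul p q) \<subseteq> (\<lambda>x. fst x @ snd x) ` (supp p \<times> supp q)"
proof
  fix w assume "w \<in> supp (smul p q)"
  then have "(\<Sum>i\<le>length w. p (take i w) * q (drop i w)) \<noteq> 0" by (simp add: supp_def smul_def)
  then obtain i where "p (take i w) * q (drop i w) \<noteq> 0" by (meson sum.not_neutral_contains_not_neutral)
  then have "(take i w, drop i w) \<in> supp p \<times> supp q" by (auto simp: supp_def)
  then show "w \<in> (\<lambda>x. fst x @ snd x) ` (supp p \<times> supp q)"
    by (metis (no_types, lifting) append_take_drop_id fst_conv image_eqI snd_conv)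
qed

lemma finite_supp_smul: "finite (supp p) \<Longrightarrow> finite (supp q) \<Longrightarrow> finite (supp (smul p q))"
  by (rule finite_subset[OF supp_smul]) auto

lemma smul_pairs:
  assumes "finite (supp p)" "finite (supp q)"
  shows "smul p q w = (\<Sum>x\<in>{x\<in>supp p \<times> supp q. fst x @ snd x = w}. p (fst x) * q (snd x))"
proof -
  define h where "h i = (take i w, drop i w)" for i
  have inj: "inj_on h {..length w}" by (auto simp: inj_on_def h_def) (metis length_take min.absorb2)
  have "smul p q w = (\<Sum>i\<le>length w. p (fst (h i)) * q (snd (h i)))"
    by (simp add: smul_def h_def)
  also have "\<dots> = (\<Sum>x\<in>h ` {..length w}. p (fst x) * q (snd x))"
    by (simp add: sum.reindex[OF inj])
  also have "\<dots> = (\<Sum>x\<in>{x\<in>supp p \<times> supp q. fst x @ snd x = w}. p (fst x) * q (snd x))"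
  proof (rule sum.mono_neutral_right)
    show "{x \<in> supp p \<times> supp q. fst x @ snd x = w} \<subseteq> h ` {..length w}"
    proof
      fix x assume "x \<in> {x \<in> supp p \<times> supp q. fst x @ snd x = w}"
      then have "fst x @ snd x = w" by simp
      then have "x = h (length (fst x))" by (auto simp: h_def prod_eq_iff)
      moreover have "length (fst x) \<le> length w" using \<open>fst x @ snd x = w\<close> by auto
      ultimately show "x \<in> h ` {..length w}" by auto
    qed
    show "\<forall>x\<in>h ` {..length w} - {x \<in> supp p \<times> supp q. fst x @ snd x = w}. p (fst x) * q (snd x) = 0"
      by (auto simp: h_def supp_def)
  qed simp
  finally show ?thesis .
qed

lemma sub_smul:
  assumes fp: "finite (supp p)" and fq: "finite (supp q)"
  shows "sub (smul p q) = sub p * sub q"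
proof -
  let ?U = "supp p" and ?V = "supp q"
  let ?h = "\<lambda>x::abx list \<times> abx list. fst x @ snd x"
  let ?W = "?h ` (?U \<times> ?V)"
  have fUV: "finite (?U \<times> ?V)" using assms by simp
  have fW: "finite ?W" using fUV by simp
  have "sub (smul p q) = (\<Sum>w\<in>?W. of_int (smul p q w) * Wimg w)"
    using fW supp_smul by (intro sub_eq) auto
  also have "\<dots> = (\<Sum>w\<in>?W. \<Sum>x\<in>{x\<in>?U \<times> ?V. ?h x = w}. of_int (p (fst x) * q (snd x)) * Wimg (?h x))"
  proof (intro sum.cong refl)
    fix w
    show "of_int (smul p q w) * Wimg w =
      (\<Sum>x\<in>{x\<in>?U \<times> ?V. ?h x = w}. of_int (p (fst x) * q (snd x)) * Wimg (?h x))"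
      unfolding smul_pairs[OF fp fq, of w] of_int_sum sum_distrib_right
      by (intro sum.cong refl) auto
  qed
  also have "\<dots> = (\<Sum>x\<in>?U \<times> ?V. of_int (p (fst x) * q (snd x)) * Wimg (?h x))"
    by (rule sum.group[OF fUV fW]) auto
  also have "\<dots> = (\<Sum>x\<in>?U \<times> ?V. (of_int (p (fst x)) * Wimg (fst x)) * (of_int (q (snd x)) * Wimg (snd x)))"
  proof (intro sum.cong refl)
    fix x :: "abx list \<times> abx list"
    have "of_int (p (fst x)) * Wimg (fst x) * (of_int (q (snd x)) * Wimg (snd x))
        = of_int (p (fst x)) * (Wimg (fst x) * of_int (q (snd x))) * Wimg (snd x)"
      by (simp add: mult.assoc)
    also have "\<dots> = of_int (p (fst x)) * (of_int (q (snd x)) * Wimg (fst x)) * Wimg (snd x)"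
      by (simp only: mult_of_int_commute)
    also have "\<dots> = of_int (p (fst x) * q (snd x)) * Wimg (?h x)"
      by (simp only: of_int_mult Wimg_append mult.assoc)
    finally show "of_int (p (fst x) * q (snd x)) * Wimg (?h x)
       = of_int (p (fst x)) * Wimg (fst x) * (of_int (q (snd x)) * Wimg (snd x))" by simp
  qed
  also have "\<dots> = (\<Sum>u\<in>?U. of_int (p u) * Wimg u) * (\<Sum>v\<in>?V. of_int (q v) * Wimg v)"
    unfolding sum_product sum.cartesian_product by (rule sum.cong) auto
  also have "\<dots> = sub p * sub q"
    using assms by (simp add: sub_eq)
  finally show ?thesis .
qed

lemma sub_sone: "sub sone = 1"
  by (subst sub_eq[of "{[]}"]) (auto simp: supp_def sone_def Wimg_Nil)

lemma sub_sletter: "sub (sletter l) = Limg l"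
  by (subst sub_eq[of "{[l]}"]) (auto simp: supp_def sletter_def Wimg_Cons Wimg_Nil)

lemma finite_supp_sone: "finite (supp sone)"
  by (rule finite_subset[of _ "{[]}"]) (auto simp: supp_def sone_def)
lemma finite_supp_sletter: "finite (supp (sletter l))"
  by (rule finite_subset[of _ "{[l]}"]) (auto simp: supp_def sletter_def)



lemma coeff_Ltr_Nil: "coeff (x * Ltr l) [] = 0"
  by (simp add: coeff_mult_Ltr)

lemma main_alg:
  fixes D P :: "ab nc"
  assumes hD: "D = 1 + D * (Ltr Ta * D * Ltr Tb - Ltr Tb * Ltr Ta)"
    and hP: "P = 1 + Ltr Ta * P * Ltr Tb"
  shows "(1 - Ltr Ta * D * Ltr Tb) * P = 1 \<and> P * (1 - Ltr Ta * D * Ltr Tb) = 1"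
proof -
  define A where "A = Ltr Ta"
  define B where "B = Ltr Tb"
  define G where "G = A * D * B - B * A"
  define M where "M = 1 - G"
  have hD': "D = 1 + D * G" using hD by (simp add: G_def A_def B_def)
  have hP': "P = 1 + A * P * B" using hP by (simp add: A_def B_def)
  have G0: "coeff G [] = 0" by (simp add: G_def A_def B_def coeff_Ltr_Nil)
  have DM: "D * M = 1"
  proof -
    have "D * M = D - D * G" by (simp add: M_def right_diff_distrib)
    also have "\<dots> = 1" using hD' by (simp add: algebra_simps)
    finally show ?thesis .
  qed
  have MD: "M * D = 1"
  proof -
    define Z where "Z = M * D - 1"
    have "Z * M = M * (D * M) - M" by (simp add: Z_def left_diff_distrib mult.assoc)
    then have ZM: "Z * M = 0" by (simp add: DM)
    have ZG: "Z = Z * G"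
    proof -
      have "Z * G = Z - Z * M" by (simp add: M_def right_diff_distrib)
      then show ?thesis using ZM by simp
    qed
    have "Z = 0"
    proof (rule contraction)
      fix w :: "ab list" assume "\<forall>v. length v < length w \<longrightarrow> coeff Z v = 0"
      then have "coeff (Z * G) w = 0" by (rule vanish_mulG[OF G0])
      then show "coeff Z w = 0" using ZG by simp
    qed
    then show ?thesis by (simp add: Z_def)
  qed
  have Mexp: "M = 1 - A * D * B + B * A" by (simp add: M_def G_def)
  have PADB: "A * D * B * P = A * D * B + A * D * B * A * P * B"
  proof -
    have "A * D * B * P = A * D * B * (1 + A * P * B)" using hP' by simp
    then show ?thesis by (simp add: algebra_simps)
  qed
  have PADB2: "P * A * D * B = A * D * B + A * P * B * A * D * B"
  proof -
    have "P * A * D * B = (1 + A * P * B) * A * D * B" using hP' by simp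
    then show ?thesis by (simp add: algebra_simps)
  qed
  have Pm1: "P - 1 = A * P * B" using hP' by (metis add_diff_cancel_left')
  define Z1 where "Z1 = P - D * (1 + B * A * P)"
  have MZ1: "M * Z1 = P - 1 - A * D * B * P"
  proof -
    have "M * Z1 = M * P - (M * D) * (1 + B * A * P)"
      by (simp add: Z1_def right_diff_distrib mult.assoc)
    also have "\<dots> = M * P - (1 + B * A * P)" by (simp add: MD)
    also have "\<dots> = P - 1 - A * D * B * P"
      by (simp add: Mexp algebra_simps)
    finally show ?thesis .
  qed
  have AZ1B: "A * Z1 * B = P - 1 - A * D * B * P"
  proof -
    have "A * Z1 * B = A * P * B - A * D * B - A * D * B * A * P * B"
      by (simp add: Z1_def algebra_simps)
    then show ?thesis using PADB Pm1 by simp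
  qed
  have Z1eq: "Z1 = G * Z1 + A * Z1 * B"
  proof -
    have "G * Z1 = Z1 - M * Z1" by (simp add: M_def left_diff_distrib)
    then show ?thesis using MZ1 AZ1B by simp
  qed
  have Z10: "Z1 = 0"
  proof (rule contraction)
    fix w :: "ab list" assume vb: "\<forall>v. length v < length w \<longrightarrow> coeff Z1 v = 0"
    have "coeff (G * Z1) w = 0" by (rule vanish_Gmul[OF G0 vb])
    moreover have "coeff (A * Z1 * B) w = 0" unfolding A_def B_def by (rule vanish_AZB[OF vb])
    ultimately show "coeff Z1 w = 0" using Z1eq by (metis add.right_neutral coeff_add)
  qed
  have L: "(1 - A * D * B) * P = 1"
  proof -
    have "(1 - A * D * B) * P - 1 = P - 1 - A * D * B * P" by (simp add: algebra_simps)
    also have "\<dots> = 0" using AZ1B Z10 by simp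
    finally show ?thesis by simp
  qed
  define Z2 where "Z2 = P - (1 + P * B * A) * D"
  have Z2M: "Z2 * M = P - 1 - P * A * D * B"
  proof -
    have "Z2 * M = P * M - (1 + P * B * A) * (D * M)"
      by (simp add: Z2_def left_diff_distrib mult.assoc)
    also have "\<dots> = P * M - (1 + P * B * A)" by (simp add: DM)
    also have "\<dots> = P - 1 - P * A * D * B"
      by (simp add: Mexp algebra_simps)
    finally show ?thesis .
  qed
  have AZ2B: "A * Z2 * B = P - 1 - P * A * D * B"
  proof -
    have "A * Z2 * B = A * P * B - A * D * B - A * P * B * A * D * B"
      by (simp add: Z2_def algebra_simps)
    then show ?thesis using PADB2 Pm1 by simp
  qed
  have Z2eq: "Z2 = Z2 * G + A * Z2 * B"
  proof -
    have "Z2 * G = Z2 - Z2 * M" by (simp add: M_def right_diff_distrib)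
    then show ?thesis using Z2M AZ2B by simp
  qed
  have Z20: "Z2 = 0"
  proof (rule contraction)
    fix w :: "ab list" assume vb: "\<forall>v. length v < length w \<longrightarrow> coeff Z2 v = 0"
    have "coeff (Z2 * G) w = 0" by (rule vanish_mulG[OF G0 vb])
    moreover have "coeff (A * Z2 * B) w = 0" unfolding A_def B_def by (rule vanish_AZB[OF vb])
    ultimately show "coeff Z2 w = 0" using Z2eq by (metis add.right_neutral coeff_add)
  qed
  have R: "P * (1 - A * D * B) = 1"
  proof -
    have "P * (1 - A * D * B) - 1 = P - 1 - P * A * D * B" by (simp add: algebra_simps)
    also have "\<dots> = 0" using AZ2B Z20 by simp
    finally show ?thesis by simp
  qed
  show ?thesis using L R by (simp add: A_def B_def)
qed



declare d.simps[simp del]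

lemma finite_supp_sadd: "finite (supp p) \<Longrightarrow> finite (supp q) \<Longrightarrow> finite (supp (sadd p q))"
  by (rule finite_subset[OF supp_sadd]) auto

lemma finite_supp_sum: "finite K \<Longrightarrow> (\<And>k. k \<in> K \<Longrightarrow> finite (supp (F k))) \<Longrightarrow> finite (supp (\<lambda>w. \<Sum>k\<in>K. F k w))"
  by (rule finite_subset[OF supp_sum]) auto

lemma finite_supp_d: "finite (supp (d n))"
proof (induction n rule: less_induct)
  case (less n)
  show ?case
  proof (cases "n \<le> 1")
    case True then show ?thesis by (subst d.simps) (simp add: finite_supp_sone)
  next
    case False
    have f1: "finite (supp (smul (d (n - 1)) (sletter Lx)))"
      using less False by (intro finite_supp_smul finite_supp_sletter) auto
    have f2: "finite (supp (\<lambda>w. \<Sum>k\<in>{2..n-1}. smul (d (n - k)) (smul (sletter La) (smul (d k) (sletter Lb))) w))"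
      using less False by (intro finite_supp_sum finite_supp_smul finite_supp_sletter) auto
    have "d n = sadd (smul (d (n - 1)) (sletter Lx))
       (\<lambda>w. \<Sum>k\<in>{2..n-1}. smul (d (n - k)) (smul (sletter La) (smul (d k) (sletter Lb))) w)"
      using False by (subst d.simps) simp
    then show ?thesis using finite_supp_sadd[OF f1 f2] by simp
  qed
qed

definition Dn :: "nat \<Rightarrow> ab nc" where "Dn n = sub (d n)"

lemma Dn_le1: "n \<le> 1 \<Longrightarrow> Dn n = 1"
  unfolding Dn_def by (subst d.simps) (simp add: sub_sone)

lemma Dn_rec:
  assumes "2 \<le> n"
  shows "Dn n = Dn (n - 1) * Limg Lx + (\<Sum>k\<in>{2..n-1}. Dn (n - k) * (Ltr Ta * (Dn k * Ltr Tb)))"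
proof -
  have fin: "finite (supp (smul (d k) (sletter Lb)))" for k
    by (intro finite_supp_smul finite_supp_sletter finite_supp_d)
  have fin2: "finite (supp (smul (sletter La) (smul (d k) (sletter Lb))))" for k
    by (intro finite_supp_smul finite_supp_sletter fin)
  have fin3: "finite (supp (smul (d j) (smul (sletter La) (smul (d k) (sletter Lb)))))" for j k
    by (intro finite_supp_smul finite_supp_d fin2)
  have f1: "finite (supp (smul (d (n - 1)) (sletter Lx)))"
    by (intro finite_supp_smul finite_supp_sletter finite_supp_d)
  have f2: "finite (supp (\<lambda>w. \<Sum>k\<in>{2..n-1}. smul (d (n - k)) (smul (sletter La) (smul (d k) (sletter Lb))) w))"
    by (intro finite_supp_sum fin3) auto
  have "Dn n = sub (sadd (smul (d (n - 1)) (sletter Lx))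
                    (\<lambda>w. \<Sum>k\<in>{2..n-1}. smul (d (n - k)) (smul (sletter La) (smul (d k) (sletter Lb))) w))"
    unfolding Dn_def using assms by (subst d.simps) simp
  also have "\<dots> = sub (smul (d (n - 1)) (sletter Lx)) +
      sub (\<lambda>w. \<Sum>k\<in>{2..n-1}. smul (d (n - k)) (smul (sletter La) (smul (d k) (sletter Lb))) w)"
    by (rule sub_sadd[OF f1 f2])
  also have "sub (\<lambda>w. \<Sum>k\<in>{2..n-1}. smul (d (n - k)) (smul (sletter La) (smul (d k) (sletter Lb))) w)
      = (\<Sum>k\<in>{2..n-1}. sub (smul (d (n - k)) (smul (sletter La) (smul (d k) (sletter Lb)))))"
    by (rule sub_sum) (auto intro: fin3)
  also have "\<dots> = (\<Sum>k\<in>{2..n-1}. Dn (n - k) * (Ltr Ta * (Dn k * Ltr Tb)))"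
    by (intro sum.cong refl)
       (simp add: sub_smul finite_supp_d finite_supp_sletter fin fin2 sub_sletter Limg_La Limg_Lb Dn_def)
  also have "sub (smul (d (n - 1)) (sletter Lx)) = Dn (n - 1) * Limg Lx"
    by (simp add: sub_smul finite_supp_d finite_supp_sletter sub_sletter Dn_def)
  finally show ?thesis .
qed

lemma hom_X: "hom (Limg Lx) 2"
proof -
  have "hom (Ltr l * Ltr l') (1 + 1)" for l l' :: ab by (rule hom_mult[OF hom_Ltr hom_Ltr])
  then show ?thesis unfolding Limg_Lx by (intro hom_diff) (simp_all add: numeral_2_eq_2)
qed

lemma hom_Dn: "hom (Dn (Suc n)) (2 * n)"
proof (induction n rule: less_induct)
  case (less n)
  show ?case
  proof (cases n)
    case 0 then show ?thesis by (simp add: Dn_le1 hom_one)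
  next
    case (Suc m)
    have r: "Dn (Suc n) = Dn n * Limg Lx + (\<Sum>k\<in>{2..n}. Dn (Suc n - k) * (Ltr Ta * (Dn k * Ltr Tb)))"
      using Dn_rec[of "Suc n"] Suc by simp
    have h1: "hom (Dn n * Limg Lx) (2 * n)"
      using hom_mult[OF less[of m] hom_X] Suc by simp
    have h2: "hom (Dn (Suc n - k) * (Ltr Ta * (Dn k * Ltr Tb))) (2 * n)" if "k \<in> {2..n}" for k
    proof -
      have a: "hom (Dn (Suc (n - k))) (2 * (n - k))" using less[of "n - k"] that by auto
      have b: "hom (Dn (Suc (k - 1))) (2 * (k - 1))" using less[of "k - 1"] that by auto
      have "hom (Dn (Suc (n - k)) * (Ltr Ta * (Dn (Suc (k - 1)) * Ltr Tb))) (2 * (n - k) + (1 + (2 * (k - 1) + 1)))"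
        by (intro hom_mult a b hom_Ltr)
      moreover have "Suc (n - k) = Suc n - k" "Suc (k - 1) = k" "2 * (n - k) + (1 + (2 * (k - 1) + 1)) = 2 * n"
        using that by auto
      ultimately show ?thesis by simp
    qed
    show ?thesis unfolding r by (intro hom_add h1 hom_sum h2)
  qed
qed

definition E :: "nat \<Rightarrow> ab nc" where "E n = Dn (Suc n)"

lemma hom2_E: "hom2 E" by (simp add: hom2_def E_def hom_Dn)

lemma E0: "E 0 = 1" by (simp add: E_def Dn_le1)

lemma E_rec: "E (Suc m) = E m * Limg Lx + (\<Sum>a<m. E a * (Ltr Ta * E (m - a) * Ltr Tb))"
proof -
  have "E (Suc m) = Dn (Suc m) * Limg Lx + (\<Sum>k\<in>{2..Suc m}. Dn (Suc (Suc m) - k) * (Ltr Ta * (Dn k * Ltr Tb)))"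
    unfolding E_def using Dn_rec[of "Suc (Suc m)"] by simp
  also have "(\<Sum>k\<in>{2..Suc m}. Dn (Suc (Suc m) - k) * (Ltr Ta * (Dn k * Ltr Tb)))
      = (\<Sum>a<m. E a * (Ltr Ta * E (m - a) * Ltr Tb))"
  proof (rule sum.reindex_bij_witness[of _ "\<lambda>a. Suc m - a" "\<lambda>k. Suc m - k"])
    fix k assume "k \<in> {2..Suc m}"
    then show "Suc m - (Suc m - k) = k" "Suc m - k \<in> {..<m}" by auto
  next
    fix a assume "a \<in> {..<m}"
    then show "Suc m - (Suc m - a) = a" "Suc m - a \<in> {2..Suc m}" by auto
  next
    fix k assume "k \<in> {2..Suc m}"
    then have k: "2 \<le> k" "k \<le> Suc m" by auto
    then have e1: "E (Suc m - k) = Dn (Suc (Suc m) - k)" by (simp add: E_def Suc_diff_le)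
    have e2: "E (m - (Suc m - k)) = Dn k" using k by (simp add: E_def)
    show "E (Suc m - k) * (Ltr Ta * E (m - (Suc m - k)) * Ltr Tb) = Dn (Suc (Suc m) - k) * (Ltr Ta * (Dn k * Ltr Tb))"
      unfolding e1 e2 by (simp add: mult.assoc)
  qed
  finally show ?thesis by (simp add: E_def)
qed



lemma E_fam:
  "E n = (if n = 0 then 1 else 0) +
     ((\<Sum>a\<le>n. E a * (if n - a = 0 then 0 else Ltr Ta * E (n - a - 1) * Ltr Tb))
      - (\<Sum>a\<le>n. E a * (if n - a = 1 then Ltr Tb * Ltr Ta else 0)))"
proof (cases n)
  case 0 then show ?thesis by (simp add: E0)
next
  case (Suc m)
  let ?A = "Ltr Ta" and ?B = "Ltr Tb"
  have s2: "(\<Sum>a\<le>Suc m. E a * (if Suc m - a = 1 then ?B * ?A else 0)) = E m * (?B * ?A)"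
    by (subst sum_single[of _ m]) auto
  have s1: "(\<Sum>a\<le>Suc m. E a * (if Suc m - a = 0 then 0 else ?A * E (Suc m - a - 1) * ?B))
      = (\<Sum>a<m. E a * (?A * E (m - a) * ?B)) + E m * (?A * ?B)"
  proof -
    have "(\<Sum>a\<le>Suc m. E a * (if Suc m - a = 0 then 0 else ?A * E (Suc m - a - 1) * ?B))
        = (\<Sum>a<Suc m. E a * (if Suc m - a = 0 then 0 else ?A * E (Suc m - a - 1) * ?B))"
      by (simp add: sum.atMost_Suc lessThan_Suc_atMost)
    also have "\<dots> = (\<Sum>a<Suc m. E a * (?A * E (m - a) * ?B))"
      by (intro sum.cong refl) auto
    also have "\<dots> = (\<Sum>a<m. E a * (?A * E (m - a) * ?B)) + E m * (?A * ?B)"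
      by (simp add: E0)
    finally show ?thesis .
  qed
  show ?thesis unfolding Suc s1 s2
    by (simp add: E_rec Limg_Lx right_diff_distrib)
qed

lemma D_eq: "Fs E = 1 + Fs E * (Ltr Ta * Fs E * Ltr Tb - Ltr Tb * Ltr Ta)"
proof -
  define G1 where "G1 n = (if n = 0 then 0 else Ltr Ta * E (n - 1) * Ltr Tb)" for n :: nat
  define G2 where "G2 n = (if n = 1 then Ltr Tb * Ltr Ta else (0::ab nc))" for n :: nat
  define dl where "dl n = (if n = 0 then (1::ab nc) else 0)" for n :: nat
  have hE: "hom2 E" by (rule hom2_E)
  have hG1: "hom2 G1" unfolding G1_def by (rule hom2_ALB[OF hE])
  have "hom (Ltr Tb * Ltr Ta) (1 + 1)" by (rule hom_mult[OF hom_Ltr hom_Ltr])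
  then have hBA: "hom (Ltr Tb * Ltr Ta) (2 * 1)" by (simp add: numeral_2_eq_2)
  have hG2: "hom2 G2" unfolding G2_def by (rule hom2_single[OF hBA])
  have h1: "hom (1::ab nc) (2 * 0)" by (simp add: hom_one)
  have hdl: "hom2 dl" unfolding dl_def by (rule hom2_single[OF h1])
  have F1: "Ltr Ta * Fs E * Ltr Tb = Fs G1" unfolding G1_def by (rule Fs_ALB[OF hE])
  have F2: "Ltr Tb * Ltr Ta = Fs G2" unfolding G2_def by (rule Fs_single[OF hBA, symmetric])
  have F0: "1 = Fs dl" unfolding dl_def by (rule Fs_single[OF h1, symmetric])
  define C1 where "C1 n = (\<Sum>a\<le>n. E a * G1 (n - a))" for n :: nat
  define C2 where "C2 n = (\<Sum>a\<le>n. E a * G2 (n - a))" for n :: nat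
  have hC1: "hom2 C1" unfolding C1_def by (rule hom2_cauchy[OF hE hG1])
  have hC2: "hom2 C2" unfolding C2_def by (rule hom2_cauchy[OF hE hG2])
  have "1 + Fs E * (Ltr Ta * Fs E * Ltr Tb - Ltr Tb * Ltr Ta) = Fs dl + (Fs E * Fs G1 - Fs E * Fs G2)"
    by (simp add: F1 F2 F0[symmetric] right_diff_distrib)
  also have "\<dots> = Fs dl + (Fs C1 - Fs C2)"
    unfolding C1_def C2_def by (simp add: Fs_cauchy[OF hE hG1] Fs_cauchy[OF hE hG2])
  also have "\<dots> = Fs (\<lambda>n. dl n + (C1 n - C2 n))"
    by (simp add: Fs_diff[OF hC1 hC2] Fs_add[OF hdl hom2_diff[OF hC1 hC2]])
  also have "(\<lambda>n. dl n + (C1 n - C2 n)) = E"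
  proof
    fix n show "dl n + (C1 n - C2 n) = E n"
      unfolding dl_def C1_def C2_def G1_def G2_def by (rule E_fam[symmetric])
  qed
  finally show ?thesis by simp
qed



lemma coeff_pow: "coeff (Ltr l ^ n) = spow (sletter l) n"
  by (induction n) (simp_all add: one_nc_def coeff_mult Ltr_def)

lemma finite_supp_c: "finite (supp (c n))"
  unfolding c_def by (intro finite_supp_smul finite_supp_sletter finite_supp_d)

lemma sub_c: "sub (c n) = Ltr Ta * Dn n * Ltr Tb"
  unfolding c_def
  by (simp add: sub_smul finite_supp_smul finite_supp_sletter finite_supp_d sub_sletter Limg_La Limg_Lb
      Dn_def mult.assoc)

lemma P_eq:
  defines "Q \<equiv> (\<lambda>n. Ltr Ta ^ n * Ltr Tb ^ n :: ab nc)"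
  shows "hom2 Q" and "Fs Q = 1 + Ltr Ta * Fs Q * Ltr Tb"
proof -
  have hQ: "hom (Q n) (2 * n)" for n
  proof -
    have "hom (Q n) (n * 1 + n * 1)" unfolding Q_def by (intro hom_mult hom_power hom_Ltr)
    then show ?thesis by (simp add: mult_2)
  qed
  then show hQ2: "hom2 Q" by (simp add: hom2_def)
  define dl where "dl n = (if n = 0 then (1::ab nc) else 0)" for n :: nat
  have h1: "hom (1::ab nc) (2 * 0)" by (simp add: hom_one)
  have hdl: "hom2 dl" unfolding dl_def by (rule hom2_single[OF h1])
  have F0: "1 = Fs dl" unfolding dl_def by (rule Fs_single[OF h1, symmetric])
  have "1 + Ltr Ta * Fs Q * Ltr Tb = Fs dl + Fs (\<lambda>n. if n = 0 then 0 else Ltr Ta * Q (n - 1) * Ltr Tb)"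
    by (simp add: F0[symmetric] Fs_ALB[OF hQ2])
  also have "\<dots> = Fs (\<lambda>n. dl n + (if n = 0 then 0 else Ltr Ta * Q (n - 1) * Ltr Tb))"
    by (rule Fs_add[OF hdl hom2_ALB[OF hQ2]])
  also have "(\<lambda>n. dl n + (if n = 0 then 0 else Ltr Ta * Q (n - 1) * Ltr Tb)) = Q"
  proof
    fix n show "dl n + (if n = 0 then 0 else Ltr Ta * Q (n - 1) * Ltr Tb) = Q n"
    proof (cases n)
      case 0 then show ?thesis by (simp add: dl_def Q_def)
    next
      case (Suc m)
      then show ?thesis by (simp add: dl_def Q_def power_commutes mult.assoc)
    qed
  qed
  finally show "Fs Q = 1 + Ltr Ta * Fs Q * Ltr Tb" by simp
qed

theorem theorem1:
  defines "S \<equiv> fsum (\<lambda>n. subst_comm (c (Suc n)))"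
      and "P \<equiv> fsum (\<lambda>n. smul (spow (sletter Ta) n) (spow (sletter Tb) n))"
  shows "(\<forall>n\<ge>1. finite {w. c n w \<noteq> 0})
         \<and> (\<forall>w. finite {n. subst_comm (c (Suc n)) w \<noteq> 0})
         \<and> smul (ssub sone S) P = sone \<and> smul P (ssub sone S) = sone"
proof -
  have C1: "\<forall>n\<ge>1. finite {w. c n w \<noteq> 0}"
    using finite_supp_c by (simp add: supp_def)
  have sc: "subst_comm (c (Suc n)) = coeff (Ltr Ta * E n * Ltr Tb)" for n
    using sub_c[of "Suc n"] by (metis E_def coeff_Ser sub_def)
  have hc: "hom (Ltr Ta * E n * Ltr Tb) (2 * n + 2)" for n
    using hom_ALB[of "E n" "2 * n"] hom2_E by (simp add: hom2_def)
  have C2: "\<forall>w. finite {n. subst_comm (c (Suc n)) w \<noteq> 0}"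
  proof
    fix w :: "ab list"
    have "{n. subst_comm (c (Suc n)) w \<noteq> 0} \<subseteq> {length w div 2 - 1}"
      using hc unfolding sc hom_def by auto
    then show "finite {n. subst_comm (c (Suc n)) w \<noteq> 0}" by (rule finite_subset) simp
  qed
  define Q where "Q = (\<lambda>n. Ltr Ta ^ n * Ltr Tb ^ n :: ab nc)"
  have SS: "Ser S = Ltr Ta * Fs E * Ltr Tb"
    unfolding S_def sc by (rule fsum_ALB[OF hom2_E])
  have PP: "Ser P = Fs Q"
    unfolding P_def Fs_def Q_def by (simp add: coeff_mult coeff_pow)
  have alg: "(1 - Ltr Ta * Fs E * Ltr Tb) * Fs Q = 1 \<and> Fs Q * (1 - Ltr Ta * Fs E * Ltr Tb) = 1"
    by (rule main_alg[OF D_eq P_eq(2)[folded Q_def]])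
  have T: "Ser (ssub sone S) = 1 - Ser S"
    by (simp add: ssub_def minus_nc_def one_nc_def)
  have "smul (ssub sone S) P = coeff (Ser (ssub sone S) * Ser P)" by (simp add: coeff_mult)
  also have "\<dots> = sone" using alg by (simp add: T SS PP one_nc_def)
  finally have C3: "smul (ssub sone S) P = sone" .
  have "smul P (ssub sone S) = coeff (Ser P * Ser (ssub sone S))" by (simp add: coeff_mult)
  also have "\<dots> = sone" using alg by (simp add: T SS PP one_nc_def)
  finally have C4: "smul P (ssub sone S) = sone" .
  show ?thesis using C1 C2 C3 C4 by blast
qed


end
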